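(* Let $R$ be a discrete valuation ring with residue field $k$ and fraction field $K$. Let $\widetilde{\mathfrak v}=(\widetilde V_i,\tilde v_i,\tilde v^i)_{i\in\mathbb Z}$ be a smoothing over $R$ of a colinked chain $\mathfrak v=(V_i,v_i,v^i)_{i\in\mathbb Z}$ with finite cosupport, and let $\mathfrak w=(W_i)_{i\in\mathbb Z}$ be an exact subrepresentation of $\mathfrak v$ of pure dimension $1$. Then there is a subrepresentation $\widetilde{\mathfrak w}\subseteq\widetilde{\mathfrak v}$ specializing to $\mathfrak w$, i.e. there are submodules $\widetilde W_i\subseteq\widetilde V_i$, each generated by an element $x_i$ whose residue in $V_i$ generates $W_i$, such that $\tilde v^i(\widetilde W_i)\subseteq\widetilde W_{i+1}$ and $\tilde v_i(\widetilde W_{i+1})\subseteq\widetilde W_i$ for all $i\in\mathbb Z$.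
   Context: $\mathcal Z$ is the quiver with vertex set $\mathbb Z$ and arrows $\alpha^i\colon i\to i+1$, $\alpha_i\colon i+1\to i$ ($i\in\mathbb Z$). A representation $(V_i,v_i,v^i)$ of $\mathcal Z$ in a category consists of objects $V_i$ and morphisms $v^i\colon V_i\to V_{i+1}$, $v_i\colon V_{i+1}\to V_i$. Over $k$ (finite-dimensional vector spaces), compositions $v^i_j$ are $v^{j-1}\circ\cdots\circ v^i$ ($j>i$), $v_j\circ\cdots\circ v_{i-1}$ ($j<i$), identity ($j=i$). A colinked chain satisfies $v_iv^i=0$, $v^iv_i=0$ and $\mathrm{Im}(v_i)+\mathrm{Im}(v^{i-1})=V_i$ for all $i$. A finite cosupport is a finite $H\subseteq\mathbb Z$ such that for each $i$ there is $j\in H$ with $v^i_j$ injective. A subrepresentation $\mathfrak w$ is a family of subspaces $W_i\subseteq V_i$ with $v^i(W_i)\subseteq W_{i+1}$, $v_i(W_{i+1})\subseteq W_i$; it has pure dimension $1$ if all $W_i$ are one-dimensional, and is exact if the restricted maps $w^i,w_i$ satisfy $\ker(w^i)=\mathrm{Im}(w_i)$, $\ker(w_i)=\mathrm{Im}(w^i)$ for all $i$. A representation of $\mathcal Z$ over a field is general if $v_i\circ v^i$ and $v^i\circ v_i$ are nonzero scalar multiples of the identity for every $i$. If $\widetilde{\mathfrak v}$ is a representation of $\mathcal Z$ in free $R$-modules of finite rank, its specialization is $\widetilde{\mathfrak v}\otimes_R k$; $\widetilde{\mathfrak v}$ is a smoothing of $\mathfrak v$ over $R$ if $\widetilde{\mathfrak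 v}\otimes_R k=\mathfrak v$ and $\widetilde{\mathfrak v}\otimes_R K$ is general. *)

theory Defs
  imports "Jordan_Normal_Form.Matrix"
begin

text \<open>Representations of the quiver Z in finite free modules are encoded by
  ranks n :: int => nat, matrices a i of the upper arrows (V_i -> V_(i+1))
  and matrices b i of the lower arrows (V_(i+1) -> V_i).\<close>

definition is_rep :: "(int \<Rightarrow> nat) \<Rightarrow> (int \<Rightarrow> 'a::semiring_1 mat) \<Rightarrow> (int \<Rightarrow> 'a mat) \<Rightarrow> bool" where
  "is_rep n a b \<longleftrightarrow> (\<forall>i. a i \<in> carrier_mat (n (i+1)) (n i) \<and> b i \<in> carrier_mat (n i) (n (i+1)))"

text \<open>Discrete valuation ring (type-class idiom): a domain with a uniformizer t,
  i.e. t nonzero non-unit with every nonzero element of the form u * t^m, u a unit.\<close>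
definition is_dvr :: "'r::idom itself \<Rightarrow> bool" where
  "is_dvr _ \<longleftrightarrow> (\<exists>t::'r. t \<noteq> 0 \<and> \<not> t dvd 1 \<and>
      (\<forall>x. x \<noteq> 0 \<longrightarrow> (\<exists>u m. u dvd 1 \<and> x = u * t ^ m)))"

definition is_ring_hom :: "('a::ring_1 \<Rightarrow> 'b::ring_1) \<Rightarrow> bool" where
  "is_ring_hom f \<longleftrightarrow> f 1 = 1 \<and> (\<forall>x y. f (x + y) = f x + f y) \<and> (\<forall>x y. f (x * y) = f x * f y)"

text \<open>pi is the residue map R -> k = R/m (surjective ring hom whose kernel is the
  maximal ideal of non-units).\<close>
definition is_residue_map :: "('r::idom \<Rightarrow> 'k::field) \<Rightarrow> bool" where
  "is_residue_map \<pi> \<longleftrightarrow> is_ring_hom \<pi> \<and> surj \<pi> \<and> (\<forall>x. \<pi> x = 0 \<longleftrightarrow> \<not> x dvd 1)"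

text \<open>iota is the inclusion of R into its fraction field K.\<close>
definition is_fraction_field_map :: "('r::idom \<Rightarrow> 'K::field) \<Rightarrow> bool" where
  "is_fraction_field_map \<iota> \<longleftrightarrow> is_ring_hom \<iota> \<and> inj \<iota> \<and>
     (\<forall>z. \<exists>x y. y \<noteq> 0 \<and> z = \<iota> x / \<iota> y)"

text \<open>Compositions v^i_j.  upcomp: a (i+k-1) * ... * a i : V_i -> V_(i+k);
  downcomp: b (i-k) * ... * b (i-1) : V_i -> V_(i-k).\<close>
fun upcomp :: "(int \<Rightarrow> nat) \<Rightarrow> (int \<Rightarrow> 'a::semiring_1 mat) \<Rightarrow> int \<Rightarrow> nat \<Rightarrow> 'a mat" where
  "upcomp n a i 0 = 1\<^sub>m (n i)"
| "upcomp n a i (Suc k) = a (i + int k) * upcomp n a i k"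

fun downcomp :: "(int \<Rightarrow> nat) \<Rightarrow> (int \<Rightarrow> 'a::semiring_1 mat) \<Rightarrow> int \<Rightarrow> nat \<Rightarrow> 'a mat" where
  "downcomp n b i 0 = 1\<^sub>m (n i)"
| "downcomp n b i (Suc k) = b (i - int k - 1) * downcomp n b i k"

definition comp_map :: "(int \<Rightarrow> nat) \<Rightarrow> (int \<Rightarrow> 'a::semiring_1 mat) \<Rightarrow> (int \<Rightarrow> 'a mat) \<Rightarrow> int \<Rightarrow> int \<Rightarrow> 'a mat" where
  "comp_map n a b i j = (if i \<le> j then upcomp n a i (nat (j - i)) else downcomp n b i (nat (i - j)))"

definition colinked_chain :: "(int \<Rightarrow> nat) \<Rightarrow> (int \<Rightarrow> 'k::field mat) \<Rightarrow> (int \<Rightarrow> 'k mat) \<Rightarrow> bool" where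
  "colinked_chain n a b \<longleftrightarrow>
     (\<forall>i. b i * a i = 0\<^sub>m (n i) (n i) \<and> a i * b i = 0\<^sub>m (n (i+1)) (n (i+1)) \<and>
          (\<forall>x \<in> carrier_vec (n i). \<exists>y \<in> carrier_vec (n (i+1)). \<exists>z \<in> carrier_vec (n (i-1)).
              x = b i *\<^sub>v y + a (i-1) *\<^sub>v z))"

definition finite_cosupport :: "(int \<Rightarrow> nat) \<Rightarrow> (int \<Rightarrow> 'k::field mat) \<Rightarrow> (int \<Rightarrow> 'k mat) \<Rightarrow> int set \<Rightarrow> bool" where
  "finite_cosupport n a b H \<longleftrightarrow> finite H \<and>
     (\<forall>i. \<exists>j\<in>H. inj_on (\<lambda>x. comp_map n a b i j *\<^sub>v x) (carrier_vec (n i)))"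

definition general_rep :: "(int \<Rightarrow> nat) \<Rightarrow> (int \<Rightarrow> 'k::field mat) \<Rightarrow> (int \<Rightarrow> 'k mat) \<Rightarrow> bool" where
  "general_rep n a b \<longleftrightarrow>
     (\<forall>i. (\<exists>c. c \<noteq> 0 \<and> b i * a i = c \<cdot>\<^sub>m 1\<^sub>m (n i)) \<and>
          (\<exists>d. d \<noteq> 0 \<and> a i * b i = d \<cdot>\<^sub>m 1\<^sub>m (n (i+1))))"

definition is_subspace :: "nat \<Rightarrow> 'k::field vec set \<Rightarrow> bool" where
  "is_subspace m W \<longleftrightarrow> W \<subseteq> carrier_vec m \<and> 0\<^sub>v m \<in> W \<and>
     (\<forall>x\<in>W. \<forall>y\<in>W. x + y \<in> W) \<and> (\<forall>c. \<forall>x\<in>W. c \<cdot>\<^sub>v x \<in> W)"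

definition subrep :: "(int \<Rightarrow> nat) \<Rightarrow> (int \<Rightarrow> 'k::field mat) \<Rightarrow> (int \<Rightarrow> 'k mat) \<Rightarrow> (int \<Rightarrow> 'k vec set) \<Rightarrow> bool" where
  "subrep n a b W \<longleftrightarrow> (\<forall>i. is_subspace (n i) (W i) \<and>
      (\<lambda>x. a i *\<^sub>v x) ` W i \<subseteq> W (i+1) \<and> (\<lambda>y. b i *\<^sub>v y) ` W (i+1) \<subseteq> W i)"

text \<open>Pure dimension 1: every W_i is one-dimensional, i.e. spanned by a nonzero vector.\<close>
definition pure_dim_one :: "(int \<Rightarrow> nat) \<Rightarrow> (int \<Rightarrow> 'k::field vec set) \<Rightarrow> bool" where
  "pure_dim_one n W \<longleftrightarrow> (\<forall>i. \<exists>w. w \<noteq> 0\<^sub>v (n i) \<and> W i = {c \<cdot>\<^sub>v w | c. True})"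

definition exact_subrep :: "(int \<Rightarrow> nat) \<Rightarrow> (int \<Rightarrow> 'k::field mat) \<Rightarrow> (int \<Rightarrow> 'k mat) \<Rightarrow> (int \<Rightarrow> 'k vec set) \<Rightarrow> bool" where
  "exact_subrep n a b W \<longleftrightarrow> (\<forall>i.
      {x \<in> W i. a i *\<^sub>v x = 0\<^sub>v (n (i+1))} = (\<lambda>y. b i *\<^sub>v y) ` W (i+1) \<and>
      {y \<in> W (i+1). b i *\<^sub>v y = 0\<^sub>v (n i)} = (\<lambda>x. a i *\<^sub>v x) ` W i)"

end

theory Submission
  imports Defs
begin

lemma mv_smult:
  assumes "A \<in> carrier_mat nr nc" "v \<in> carrier_vec nc"
  shows "A *\<^sub>v (k \<cdot>\<^sub>v v) = (k::'a::comm_ring_1) \<cdot>\<^sub>v (A *\<^sub>v v)"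
  using assms by (intro eq_vecI) (auto simp: scalar_prod_smult_right)

lemma scalar_id_mv:
  assumes "v \<in> carrier_vec n"
  shows "(c \<cdot>\<^sub>m 1\<^sub>m n) *\<^sub>v v = (c::'a::comm_ring_1) \<cdot>\<^sub>v v"
  using assms by (intro eq_vecI) (auto simp: scalar_prod_smult_left)

lemma span_eq:
  assumes "W = {c \<cdot>\<^sub>v w | c. True}" "v = g \<cdot>\<^sub>v w" "(g::'a::field) \<noteq> 0"
  shows "W = {c \<cdot>\<^sub>v v | c. True}"
proof -
  have e1: "c \<cdot>\<^sub>v w = (c / g) \<cdot>\<^sub>v v" for c
    using assms(2,3) by (simp add: smult_smult_assoc)
  have e2: "c \<cdot>\<^sub>v v = (c * g) \<cdot>\<^sub>v w" for c
    using assms(2) by (simp add: smult_smult_assoc)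
  show ?thesis
    unfolding assms(1) using e1 e2 by blast
qed

lemma nak_lemma:
  fixes S :: "'a::comm_ring_1 vec set" and t :: 'a
  assumes sub: "S \<subseteq> carrier_vec N"
    and add: "\<And>x y. x \<in> S \<Longrightarrow> y \<in> S \<Longrightarrow> x + y \<in> S"
    and sm: "\<And>r x. x \<in> S \<Longrightarrow> r \<cdot>\<^sub>v x \<in> S"
    and dec: "\<And>x. x \<in> carrier_vec N \<Longrightarrow> \<exists>s\<in>S. \<exists>w'\<in>carrier_vec N. x = s + t \<cdot>\<^sub>v w'"
    and pw: "\<And>x. x \<in> carrier_vec N \<Longrightarrow> t ^ e \<cdot>\<^sub>v x \<in> S"
    and w: "w \<in> carrier_vec N"
  shows "w \<in> S"
proof -
  let ?P = "\<lambda>k. \<forall>w\<in>carrier_vec N. t ^ k \<cdot>\<^sub>v w \<in> S"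
  have step: "?P k" if "?P (Suc k)" for k
  proof
    fix w :: "'a vec" assume w: "w \<in> carrier_vec N"
    obtain s w' where s: "s \<in> S" and w': "w' \<in> carrier_vec N" and eq: "w = s + t \<cdot>\<^sub>v w'"
      using dec[OF w] by blast
    have sc: "s \<in> carrier_vec N" using s sub by auto
    have "t ^ k \<cdot>\<^sub>v w = t ^ k \<cdot>\<^sub>v s + t ^ Suc k \<cdot>\<^sub>v w'"
      unfolding eq using sc w' by (intro eq_vecI) (auto simp: algebra_simps)
    moreover have "t ^ k \<cdot>\<^sub>v s \<in> S" using sm s by auto
    moreover have "t ^ Suc k \<cdot>\<^sub>v w' \<in> S" using that w' by auto
    ultimately show "t ^ k \<cdot>\<^sub>v w \<in> S" using add by auto
  qed
  have "?P (e - l)" for l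
  proof (induction l)
    case 0 then show ?case using pw by simp
  next
    case (Suc l)
    show ?case
    proof (cases "e - l = 0")
      case True then show ?thesis using Suc by simp
    next
      case False
      then have "e - l = Suc (e - Suc l)" by arith
      then show ?thesis using step Suc by metis
    qed
  qed
  from this[of e] show ?thesis using w by simp
qed

locale Lsetup = ring_hom p for p :: "'r::idom \<Rightarrow> 'k::field" +
  fixes t :: 'r and n :: "int \<Rightarrow> nat"
    and A B :: "int \<Rightarrow> 'r mat" and W :: "int \<Rightarrow> 'k vec set"
  assumes t0: "t \<noteq> 0" and tnu: "\<not> t dvd 1"
    and dvr: "\<And>x. x \<noteq> 0 \<Longrightarrow> \<exists>u m. u dvd 1 \<and> x = u * t ^ m"
    and surjp: "surj p"
    and pzero: "\<And>x. p x = 0 \<longleftrightarrow> \<not> x dvd 1"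
    and Acar: "\<And>i. A i \<in> carrier_mat (n (i+1)) (n i)"
    and Bcar: "\<And>i. B i \<in> carrier_mat (n i) (n (i+1))"
    and BA: "\<And>i. \<exists>c. c \<noteq> 0 \<and> p c = 0 \<and> B i * A i = c \<cdot>\<^sub>m 1\<^sub>m (n i)"
    and AB: "\<And>i. \<exists>c. c \<noteq> 0 \<and> p c = 0 \<and> A i * B i = c \<cdot>\<^sub>m 1\<^sub>m (n (i+1))"
    and colink: "\<And>i x. x \<in> carrier_vec (n i) \<Longrightarrow> \<exists>y\<in>carrier_vec (n (i+1)). \<exists>z\<in>carrier_vec (n (i-1)).
        x = map_mat p (B i) *\<^sub>v y + map_mat p (A (i-1)) *\<^sub>v z"
    and Wsub: "\<And>i. W i \<subseteq> carrier_vec (n i)"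
    and WA: "\<And>i. (\<lambda>x. map_mat p (A i) *\<^sub>v x) ` W i \<subseteq> W (i+1)"
    and WB: "\<And>i. (\<lambda>y. map_mat p (B i) *\<^sub>v y) ` W (i+1) \<subseteq> W i"
    and exA: "\<And>i. {x \<in> W i. map_mat p (A i) *\<^sub>v x = 0\<^sub>v (n (i+1))} = (\<lambda>y. map_mat p (B i) *\<^sub>v y) ` W (i+1)"
    and pd1: "\<And>i. \<exists>w. w \<noteq> 0\<^sub>v (n i) \<and> W i = {c \<cdot>\<^sub>v w | c. True}"
begin

lemma ptdvd: "p x = 0 \<longleftrightarrow> t dvd x"
proof
  assume "p x = 0"
  then have nu: "\<not> x dvd 1" using pzero by auto
  show "t dvd x"
  proof (cases "x = 0")
    case False
    then obtain u m where u: "u dvd 1" and x: "x = u * t ^ m" using dvr by blast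
    show ?thesis
    proof (cases m)
      case 0 then show ?thesis using u x nu by simp
    next
      case (Suc k) then show ?thesis using x by simp
    qed
  qed simp
next
  assume "t dvd x"
  then show "p x = 0" using tnu pzero dvd_trans by blast
qed

lemma pt: "p t = 0" using ptdvd by simp

lemma unit_of: "p u \<noteq> 0 \<Longrightarrow> u dvd 1" using pzero by auto

lemma vdiv:
  assumes v: "v \<in> carrier_vec N" and z: "map_vec p v = 0\<^sub>v N"
  shows "\<exists>v'\<in>carrier_vec N. v = t \<cdot>\<^sub>v v'"
proof -
  have "\<forall>l<N. p (v $ l) = 0"
    using z v by (metis carrier_vecD index_map_vec(1) index_zero_vec(1))
  then have d: "\<forall>l<N. t dvd v $ l" using ptdvd by auto
  define v' where "v' = vec N (\<lambda>l. SOME r. v $ l = t * r)"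
  have "v = t \<cdot>\<^sub>v v'"
  proof (intro eq_vecI)
    fix l assume "l < dim_vec (t \<cdot>\<^sub>v v')"
    then have l: "l < N" by (simp add: v'_def)
    then have "v $ l = t * (SOME r. v $ l = t * r)"
      using d by (metis (mono_tags) dvdE someI_ex)
    then show "v $ l = (t \<cdot>\<^sub>v v') $ l" using l by (simp add: v'_def)
  qed (use v in \<open>simp add: v'_def\<close>)
  then show ?thesis unfolding v'_def by auto
qed

lemma pick: "p (SOME r. p r = g) = g"
  by (rule someI_ex[of "\<lambda>r. p r = g"]) (metis surjD surjp)

lemma liftv:
  assumes "y \<in> carrier_vec N"
  shows "\<exists>Y\<in>carrier_vec N. map_vec p Y = y"
proof -
  define Y where "Y = vec N (\<lambda>l. SOME r. p r = y $ l)"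
  have "map_vec p Y = y"
    using assms by (intro eq_vecI) (auto simp: Y_def pick)
  then show ?thesis by (auto simp: Y_def)
qed

lemma lift_scalar: "\<exists>u. p u = g" using surjp by (metis surjD)

lemma vhom_mv: "M \<in> carrier_mat a b \<Longrightarrow> v \<in> carrier_vec b \<Longrightarrow> map_vec p (M *\<^sub>v v) = map_mat p M *\<^sub>v map_vec p v"
  by (rule mult_mat_vec_hom)

lemma vhom_add: "v \<in> carrier_vec N \<Longrightarrow> w \<in> carrier_vec N \<Longrightarrow> map_vec p (v + w) = map_vec p v + map_vec p w"
  by (intro eq_vecI) (auto simp: hom_add)

lemma vhom_minus: "v \<in> carrier_vec N \<Longrightarrow> w \<in> carrier_vec N \<Longrightarrow> map_vec p (v - w) = map_vec p v - map_vec p w"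
  by (intro eq_vecI) (auto simp: hom_minus)

lemma vhom_smult: "map_vec p (c \<cdot>\<^sub>v v) = p c \<cdot>\<^sub>v map_vec p v"
  by (rule vec_hom_smult)

end

context Lsetup begin

definition dir :: "int \<Rightarrow> bool" where
  "dir i \<longleftrightarrow> (\<exists>w\<in>W i. map_mat p (A i) *\<^sub>v w \<noteq> 0\<^sub>v (n (i+1)))"

definition relstep :: "int \<Rightarrow> 'r vec \<Rightarrow> 'r vec \<Rightarrow> bool" where
  "relstep i u v \<longleftrightarrow> (if dir i then A i *\<^sub>v u = v else B i *\<^sub>v v = u)"

definition relfam :: "int \<Rightarrow> int \<Rightarrow> (int \<Rightarrow> 'r vec) \<Rightarrow> bool" where
  "relfam m j x \<longleftrightarrow> (\<forall>i. m \<le> i \<and> i \<le> j \<longrightarrow> x i \<in> carrier_vec (n i)) \<and>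
      (\<forall>i. m \<le> i \<and> i < j \<longrightarrow> relstep i (x i) (x (i+1)))"

definition liftok :: "int \<Rightarrow> 'r vec \<Rightarrow> bool" where
  "liftok i v \<longleftrightarrow> v \<in> carrier_vec (n i) \<and> W i = {c \<cdot>\<^sub>v map_vec p v | c. True}"

lemma relstep_lin:
  assumes "relstep i u v" "relstep i u' v'"
    and c: "u \<in> carrier_vec (n i)" "u' \<in> carrier_vec (n i)" "v \<in> carrier_vec (n (i+1))" "v' \<in> carrier_vec (n (i+1))"
  shows "relstep i (a \<cdot>\<^sub>v u + b \<cdot>\<^sub>v u') (a \<cdot>\<^sub>v v + b \<cdot>\<^sub>v v')"
proof (cases "dir i")
  case True
  then have "A i *\<^sub>v u = v" "A i *\<^sub>v u' = v'" using assms unfolding relstep_def by auto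
  then show ?thesis using True c Acar[of i]
    by (simp add: relstep_def mult_add_distrib_mat_vec[of _ "n (i+1)" "n i"] mv_smult[of _ "n (i+1)" "n i"])
next
  case False
  then have "B i *\<^sub>v v = u" "B i *\<^sub>v v' = u'" using assms unfolding relstep_def by auto
  then show ?thesis using False c Bcar[of i]
    by (simp add: relstep_def mult_add_distrib_mat_vec[of _ "n i" "n (i+1)"] mv_smult[of _ "n i" "n (i+1)"])
qed

lemma relfam_lin:
  assumes "relfam m j x" "relfam m j y"
  shows "relfam m j (\<lambda>i. a \<cdot>\<^sub>v x i + b \<cdot>\<^sub>v y i)"
  using assms unfolding relfam_def
  by (auto intro!: relstep_lin)

lemma relfam_zero: "relfam m j (\<lambda>i. 0\<^sub>v (n i))"
proof -
  have "relstep i (0\<^sub>v (n i)) (0\<^sub>v (n (i+1)))" for i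
    using Acar[of i] Bcar[of i] by (auto simp: relstep_def)
  then show ?thesis unfolding relfam_def by auto
qed

lemma relfam_ext:
  assumes "relfam m i x" "m \<le> i" "v \<in> carrier_vec (n (i+1))" "relstep i (x i) v"
  shows "relfam m (i+1) (x(i+1 := v))"
  using assms unfolding relfam_def
  by (auto simp: not_less_iff_gr_or_eq)

lemma relfam_add:
  assumes "relfam m j x" "relfam m j y"
  shows "relfam m j (\<lambda>i. x i + y i)"
  using relfam_lin[OF assms, of 1 1] by simp

lemma relstep_smult:
  assumes "relstep i u v"
    and c: "u \<in> carrier_vec (n i)" "v \<in> carrier_vec (n (i+1))"
  shows "relstep i (a \<cdot>\<^sub>v u) (a \<cdot>\<^sub>v v)"
proof (cases "dir i")
  case True
  then have "A i *\<^sub>v u = v" using assms unfolding relstep_def by auto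
  then show ?thesis using True c Acar[of i]
    by (simp add: relstep_def mv_smult[of _ "n (i+1)" "n i"])
next
  case False
  then have "B i *\<^sub>v v = u" using assms unfolding relstep_def by auto
  then show ?thesis using False c Bcar[of i]
    by (simp add: relstep_def mv_smult[of _ "n i" "n (i+1)"])
qed

lemma relfam_smult:
  assumes "relfam m j x"
  shows "relfam m j (\<lambda>i. a \<cdot>\<^sub>v x i)"
  using assms unfolding relfam_def
  by (auto intro!: relstep_smult)

lemma G:
  assumes "m \<le> j"
  shows "\<forall>w\<in>carrier_vec (n j). \<exists>\<delta> z. relfam m j \<delta> \<and> z \<in> carrier_vec (n (j+1)) \<and> w = \<delta> j + B j *\<^sub>v z"
  using assms
proof (induction j rule: int_ge_induct)
  case base
  show ?case
  proof
    fix w :: "'r vec" assume w: "w \<in> carrier_vec (n m)"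
    have "relfam m m (\<lambda>_. w)" using w unfolding relfam_def by auto
    moreover have "w = w + B m *\<^sub>v 0\<^sub>v (n (m+1))" using w Bcar[of m] by auto
    ultimately show "\<exists>\<delta> z. relfam m m \<delta> \<and> z \<in> carrier_vec (n (m+1)) \<and> w = \<delta> m + B m *\<^sub>v z"
      by (metis zero_carrier_vec)
  qed
next
  case (step i)
  define j where "j = i + 1"
  have ji: "j - 1 = i" by (simp add: j_def)
  have mj: "m \<le> j" using step(1) by (simp add: j_def)
  have IH: "\<forall>w\<in>carrier_vec (n i). \<exists>\<delta> z. relfam m i \<delta> \<and> z \<in> carrier_vec (n j) \<and> w = \<delta> i + B i *\<^sub>v z"
    using step(2) by (simp add: j_def)
  define S where "S = {\<delta> j + B j *\<^sub>v z | \<delta> z. relfam m j \<delta> \<and> z \<in> carrier_vec (n (j+1))}"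
  have BjC: "B j \<in> carrier_mat (n j) (n (j+1))" by (rule Bcar)
  have AiC: "A i \<in> carrier_mat (n j) (n i)" using Acar[of i] by (simp add: j_def)
  have BiC: "B i \<in> carrier_mat (n i) (n j)" using Bcar[of i] by (simp add: j_def)
  have AjC: "A j \<in> carrier_mat (n (j+1)) (n j)" by (rule Acar)
  have relfam_j: "relfam m j \<delta> \<Longrightarrow> \<delta> j \<in> carrier_vec (n j)" for \<delta>
    using mj unfolding relfam_def by auto
  have Ssub: "S \<subseteq> carrier_vec (n j)"
    using BjC relfam_j by (auto simp: S_def)
  have Sadd: "x + y \<in> S" if xS: "x \<in> S" and yS: "y \<in> S" for x y
  proof -
    obtain d1 z1 where d1: "relfam m j d1" "z1 \<in> carrier_vec (n (j+1))" "x = d1 j + B j *\<^sub>v z1"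
      using xS unfolding S_def by blast
    obtain d2 z2 where d2: "relfam m j d2" "z2 \<in> carrier_vec (n (j+1))" "y = d2 j + B j *\<^sub>v z2"
      using yS unfolding S_def by blast
    have e: "B j *\<^sub>v (z1 + z2) = B j *\<^sub>v z1 + B j *\<^sub>v z2"
      using BjC d1 d2 by (simp add: mult_add_distrib_mat_vec)
    have "x + y = (\<lambda>k. d1 k + d2 k) j + B j *\<^sub>v (z1 + z2)"
      unfolding e d1(3) d2(3) using relfam_j[OF d1(1)] relfam_j[OF d2(1)] BjC d1(2) d2(2)
      by (intro eq_vecI) (auto simp: algebra_simps)
    moreover have "relfam m j (\<lambda>k. d1 k + d2 k)" using relfam_add d1 d2 by blast
    moreover have "z1 + z2 \<in> carrier_vec (n (j+1))" using d1(2) d2(2) by simp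
    ultimately show ?thesis unfolding S_def
      by (intro CollectI exI[of _ "x + y"] exI[of _ "\<lambda>k. d1 k + d2 k"] exI[of _ "z1+z2"]) auto
  qed
  have Ssm: "r \<cdot>\<^sub>v x \<in> S" if xS: "x \<in> S" for r x
  proof -
    obtain d1 z1 where d1: "relfam m j d1" "z1 \<in> carrier_vec (n (j+1))" "x = d1 j + B j *\<^sub>v z1"
      using xS unfolding S_def by blast
    have e: "B j *\<^sub>v (r \<cdot>\<^sub>v z1) = r \<cdot>\<^sub>v (B j *\<^sub>v z1)"
      using BjC d1 by (simp add: mv_smult)
    have "r \<cdot>\<^sub>v x = (\<lambda>k. r \<cdot>\<^sub>v d1 k) j + B j *\<^sub>v (r \<cdot>\<^sub>v z1)"
      unfolding e d1(3) using relfam_j[OF d1(1)] BjC d1(2)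
      by (intro eq_vecI) (auto simp: algebra_simps)
    moreover have "relfam m j (\<lambda>k. r \<cdot>\<^sub>v d1 k)" using relfam_smult d1 by blast
    moreover have "r \<cdot>\<^sub>v z1 \<in> carrier_vec (n (j+1))" using d1(2) by simp
    ultimately show ?thesis unfolding S_def
      by (intro CollectI exI[of _ "\<lambda>k. r \<cdot>\<^sub>v d1 k"] exI[of _ "r \<cdot>\<^sub>v z1"]) auto
  qed
  obtain c1 where c1: "c1 \<noteq> 0" "p c1 = 0" "B j * A j = c1 \<cdot>\<^sub>m 1\<^sub>m (n j)" using BA by blast
  obtain u e where ue: "u dvd 1" "c1 = u * t ^ e" using dvr[OF c1(1)] by blast
  obtain u' where u': "1 = u * u'" using ue(1) by (auto elim: dvdE)
  have Spw: "t ^ e \<cdot>\<^sub>v w \<in> S" if w: "w \<in> carrier_vec (n j)" for w :: "'r vec"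
  proof -
    have "B j *\<^sub>v (A j *\<^sub>v (u' \<cdot>\<^sub>v w)) = (B j * A j) *\<^sub>v (u' \<cdot>\<^sub>v w)"
      using BjC AjC w by simp
    also have "\<dots> = c1 \<cdot>\<^sub>v (u' \<cdot>\<^sub>v w)" unfolding c1(3) using w by (simp add: scalar_id_mv)
    also have "\<dots> = t ^ e \<cdot>\<^sub>v w" unfolding smult_smult_assoc ue(2)
      by (metis (no_types, lifting) mult.commute mult.left_commute mult_1 u')
    finally have eq: "t ^ e \<cdot>\<^sub>v w = (\<lambda>k. 0\<^sub>v (n k)) j + B j *\<^sub>v (A j *\<^sub>v (u' \<cdot>\<^sub>v w))"
      using BjC AjC w by simp
    show ?thesis unfolding eq S_def using relfam_zero AjC w
      by (intro CollectI exI[of _ "\<lambda>k. 0\<^sub>v (n k)"] exI[of _ "A j *\<^sub>v (u' \<cdot>\<^sub>v w)"]) auto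
  qed
  have Sdec: "\<exists>s\<in>S. \<exists>w'\<in>carrier_vec (n j). w = s + t \<cdot>\<^sub>v w'" if w: "w \<in> carrier_vec (n j)" for w :: "'r vec"
  proof -
    obtain y z where y: "y \<in> carrier_vec (n (j+1))" and z: "z \<in> carrier_vec (n i)"
      and yz: "map_vec p w = map_mat p (B j) *\<^sub>v y + map_mat p (A i) *\<^sub>v z"
      using colink[of "map_vec p w" j] w unfolding ji by auto
    obtain Y where Y: "Y \<in> carrier_vec (n (j+1))" "map_vec p Y = y" using liftv[OF y] by blast
    obtain Z where Z: "Z \<in> carrier_vec (n i)" "map_vec p Z = z" using liftv[OF z] by blast
    have BY: "B j *\<^sub>v Y \<in> carrier_vec (n j)" using BjC Y by simp
    have AZ: "A i *\<^sub>v Z \<in> carrier_vec (n j)" using AiC Z by simp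
    have sum_c: "map_mat p (B j) *\<^sub>v y + map_mat p (A i) *\<^sub>v z \<in> carrier_vec (n j)"
      using y z BjC AiC by simp
    have "map_vec p (w - (B j *\<^sub>v Y + A i *\<^sub>v Z)) = 0\<^sub>v (n j)"
      using w BY AZ yz Y Z BjC AiC sum_c
      by (simp add: vhom_minus[of _ "n j"] vhom_add[of _ "n j"] vhom_mv[of _ "n j"])
    then obtain w' where w': "w' \<in> carrier_vec (n j)" "w - (B j *\<^sub>v Y + A i *\<^sub>v Z) = t \<cdot>\<^sub>v w'"
      using vdiv[of "w - (B j *\<^sub>v Y + A i *\<^sub>v Z)" "n j"] w BY AZ by auto
    obtain \<delta> z2 where dz: "relfam m i \<delta>" "z2 \<in> carrier_vec (n j)" "Z = \<delta> i + B i *\<^sub>v z2"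
      using IH Z by blast
    have di: "\<delta> i \<in> carrier_vec (n i)" using dz(1) step(1) unfolding relfam_def by auto
    obtain c1' where c1': "c1' \<noteq> 0" "p c1' = 0" "B i * A i = c1' \<cdot>\<^sub>m 1\<^sub>m (n i)" using BA by blast
    obtain c2 where c2: "c2 \<noteq> 0" "p c2 = 0" "A i * B i = c2 \<cdot>\<^sub>m 1\<^sub>m (n j)" using AB[of i] by (auto simp: j_def)
    obtain c3 where c3: "c2 = t * c3" using c2(2) ptdvd by (auto elim: dvdE)
    define x0 where "x0 = (if dir i then \<delta> else (\<lambda>k. c1' \<cdot>\<^sub>v \<delta> k))"
    have x0: "relfam m i x0" using dz(1) relfam_smult unfolding x0_def by auto
    have x0i: "relstep i (x0 i) (A i *\<^sub>v \<delta> i)"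
    proof (cases "dir i")
      case True then show ?thesis by (simp add: x0_def relstep_def)
    next
      case False
      have "B i *\<^sub>v (A i *\<^sub>v \<delta> i) = (B i * A i) *\<^sub>v \<delta> i" using BiC AiC di by simp
      also have "\<dots> = c1' \<cdot>\<^sub>v \<delta> i" unfolding c1'(3) using di by (simp add: scalar_id_mv)
      finally show ?thesis using False by (simp add: x0_def relstep_def)
    qed
    define \<delta>' where "\<delta>' = x0(j := A i *\<^sub>v \<delta> i)"
    have rd: "relfam m j \<delta>'" unfolding \<delta>'_def j_def
      using relfam_ext[OF x0 step(1) _ x0i] AiC di by (simp add: j_def)
    have d'j: "\<delta>' j = A i *\<^sub>v \<delta> i" by (simp add: \<delta>'_def)
    have h2: "A i *\<^sub>v Z = A i *\<^sub>v \<delta> i + A i *\<^sub>v (B i *\<^sub>v z2)"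
      unfolding dz(3) using AiC BiC di dz(2) by (simp add: mult_add_distrib_mat_vec)
    have h3: "A i *\<^sub>v (B i *\<^sub>v z2) = (t * c3) \<cdot>\<^sub>v z2"
    proof -
      have "A i *\<^sub>v (B i *\<^sub>v z2) = (A i * B i) *\<^sub>v z2" using AiC BiC dz(2) by simp
      also have "\<dots> = c2 \<cdot>\<^sub>v z2" unfolding c2(3) using dz(2) by (simp add: scalar_id_mv)
      finally show ?thesis using c3 by simp
    qed
    have ADi: "A i *\<^sub>v \<delta> i \<in> carrier_vec (n j)" using AiC di by simp
    have ABz: "A i *\<^sub>v (B i *\<^sub>v z2) \<in> carrier_vec (n j)" using AiC BiC dz(2) by simp
    have goal: "w = (\<delta>' j + B j *\<^sub>v Y) + t \<cdot>\<^sub>v (w' + c3 \<cdot>\<^sub>v z2)"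
    proof (rule eq_vecI)
      fix l assume "l < dim_vec ((\<delta>' j + B j *\<^sub>v Y) + t \<cdot>\<^sub>v (w' + c3 \<cdot>\<^sub>v z2))"
      then have l: "l < n j" using ADi d'j dz(2) by simp
      have e1: "w $ l = (B j *\<^sub>v Y) $ l + (A i *\<^sub>v Z) $ l + t * w' $ l"
        using arg_cong[OF w'(2), of "\<lambda>v. v $ l"] l carrier_vecD[OF w] carrier_vecD[OF BY] carrier_vecD[OF AZ] carrier_vecD[OF w'(1)]
        by (simp add: algebra_simps)
      have e2: "(A i *\<^sub>v Z) $ l = (A i *\<^sub>v \<delta> i) $ l + (A i *\<^sub>v (B i *\<^sub>v z2)) $ l"
        using arg_cong[OF h2, of "\<lambda>v. v $ l"] l carrier_vecD[OF ADi] carrier_vecD[OF ABz] by simp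
      have e3: "(A i *\<^sub>v (B i *\<^sub>v z2)) $ l = t * c3 * z2 $ l"
        using arg_cong[OF h3, of "\<lambda>v. v $ l"] l carrier_vecD[OF dz(2)] by simp
      show "w $ l = ((\<delta>' j + B j *\<^sub>v Y) + t \<cdot>\<^sub>v (w' + c3 \<cdot>\<^sub>v z2)) $ l"
        using l carrier_vecD[OF ADi] carrier_vecD[OF BY] carrier_vecD[OF w'(1)] carrier_vecD[OF dz(2)]
        unfolding d'j by (simp add: e1 e2 e3 algebra_simps)
    qed (use w ADi BY w'(1) dz(2) d'j in simp)
    have "\<delta>' j + B j *\<^sub>v Y \<in> S" unfolding S_def using rd Y(1) by blast
    moreover have "w' + c3 \<cdot>\<^sub>v z2 \<in> carrier_vec (n j)" using w'(1) dz(2) by simp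
    ultimately show ?thesis using goal by blast
  qed
  show ?case
  proof
    fix w :: "'r vec" assume w: "w \<in> carrier_vec (n (i+1))"
    then have "w \<in> S" using nak_lemma[OF Ssub Sadd Ssm Sdec Spw] by (simp add: j_def)
    then show "\<exists>\<delta> z. relfam m (i+1) \<delta> \<and> z \<in> carrier_vec (n (i+1+1)) \<and> w = \<delta> (i+1) + B (i+1) *\<^sub>v z"
      unfolding S_def j_def by blast
  qed
qed

end

context Lsetup begin

lemma Wgen: "\<exists>w. w \<in> carrier_vec (n i) \<and> w \<noteq> 0\<^sub>v (n i) \<and> W i = {c \<cdot>\<^sub>v w | c. True}"
proof -
  obtain w where w: "w \<noteq> 0\<^sub>v (n i)" "W i = {c \<cdot>\<^sub>v w | c. True}" using pd1 by blast
  have "1 \<cdot>\<^sub>v w \<in> W i" using w(2) by blast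
  then have "w \<in> carrier_vec (n i)" using Wsub by auto
  then show ?thesis using w by blast
qed

lemma liftok_in: "liftok i v \<Longrightarrow> map_vec p v \<in> W i"
  unfolding liftok_def by (metis (mono_tags, lifting) mem_Collect_eq one_smult_vec)

lemma liftok_nz: assumes "liftok i v" shows "map_vec p v \<noteq> 0\<^sub>v (n i)"
proof
  assume z: "map_vec p v = 0\<^sub>v (n i)"
  obtain w where w: "w \<in> carrier_vec (n i)" "w \<noteq> 0\<^sub>v (n i)" "W i = {c \<cdot>\<^sub>v w | c. True}" using Wgen by blast
  have "w \<in> W i" using w(3) by (metis (mono_tags, lifting) mem_Collect_eq one_smult_vec)
  then obtain c where "w = c \<cdot>\<^sub>v map_vec p v" using assms unfolding liftok_def by auto
  then have "w = 0\<^sub>v (n i)" unfolding z by (intro eq_vecI) auto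
  then show False using w(2) by simp
qed

lemma zero_iff_smult: "(v::'a::field vec) \<noteq> 0\<^sub>v N \<Longrightarrow> v \<in> carrier_vec N \<Longrightarrow> g \<cdot>\<^sub>v v = 0\<^sub>v N \<Longrightarrow> g = 0"
proof (rule ccontr)
  assume "v \<noteq> 0\<^sub>v N" "v \<in> carrier_vec N" "g \<cdot>\<^sub>v v = 0\<^sub>v N" "g \<noteq> 0"
  then have "(1/g) \<cdot>\<^sub>v (g \<cdot>\<^sub>v v) = 0\<^sub>v N" by (intro eq_vecI) auto
  then show False using \<open>g \<noteq> 0\<close> \<open>v \<noteq> 0\<^sub>v N\<close> by (simp add: smult_smult_assoc)
qed

lemma mid:
  assumes "m \<le> j"
  shows "\<exists>x. relfam m j x \<and> (\<forall>i. m \<le> i \<and> i \<le> j \<longrightarrow> liftok i (x i))"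
  using assms
proof (induction j rule: int_ge_induct)
  case base
  obtain w where w: "w \<in> carrier_vec (n m)" "w \<noteq> 0\<^sub>v (n m)" "W m = {c \<cdot>\<^sub>v w | c. True}" using Wgen by blast
  obtain X where X: "X \<in> carrier_vec (n m)" "map_vec p X = w" using liftv[OF w(1)] by blast
  have "relfam m m (\<lambda>_. X)" using X unfolding relfam_def by auto
  moreover have "liftok m X" using X w unfolding liftok_def by auto
  ultimately show ?case by auto
next
  case (step i)
  obtain x where x: "relfam m i x" "\<And>k. m \<le> k \<Longrightarrow> k \<le> i \<Longrightarrow> liftok k (x k)" using step(2) by blast
  have xi: "liftok i (x i)" using x(2) step(1) by auto
  have xic: "x i \<in> carrier_vec (n i)" using xi unfolding liftok_def by auto
  define v0 where "v0 = map_vec p (x i)"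
  have v0W: "v0 \<in> W i" using liftok_in[OF xi] unfolding v0_def .
  have v0nz: "v0 \<noteq> 0\<^sub>v (n i)" using liftok_nz[OF xi] unfolding v0_def .
  have v0c: "v0 \<in> carrier_vec (n i)" using xic unfolding v0_def by simp
  have aC: "map_mat p (A i) \<in> carrier_mat (n (i+1)) (n i)" using Acar[of i] by simp
  have bC: "map_mat p (B i) \<in> carrier_mat (n i) (n (i+1))" using Bcar[of i] by simp
  show ?case
  proof (cases "dir i")
    case True
    then obtain wv where wv: "wv \<in> W i" "map_mat p (A i) *\<^sub>v wv \<noteq> 0\<^sub>v (n (i+1))" unfolding dir_def by blast
    obtain c where c: "wv = c \<cdot>\<^sub>v v0" using wv(1) xi unfolding liftok_def v0_def by auto
    have av0: "map_mat p (A i) *\<^sub>v v0 \<noteq> 0\<^sub>v (n (i+1))"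
    proof
      assume "map_mat p (A i) *\<^sub>v v0 = 0\<^sub>v (n (i+1))"
      then have "map_mat p (A i) *\<^sub>v wv = 0\<^sub>v (n (i+1))" unfolding c
        using mv_smult[OF aC v0c] by (simp, intro eq_vecI, auto)
      then show False using wv(2) by simp
    qed
    have "map_mat p (A i) *\<^sub>v v0 \<in> W (i+1)" using WA v0W by blast
    obtain w' where w': "w' \<in> carrier_vec (n (i+1))" "w' \<noteq> 0\<^sub>v (n (i+1))" "W (i+1) = {c \<cdot>\<^sub>v w' | c. True}" using Wgen by blast
    obtain g where g: "map_mat p (A i) *\<^sub>v v0 = g \<cdot>\<^sub>v w'" using \<open>map_mat p (A i) *\<^sub>v v0 \<in> W (i+1)\<close> w'(3) by auto
    have "g \<noteq> 0" using g av0 by (auto intro!: eq_vecI) (use w'(1) in auto)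
    have Wi1: "W (i+1) = {c \<cdot>\<^sub>v (map_mat p (A i) *\<^sub>v v0) | c. True}" by (rule span_eq[OF w'(3) g \<open>g \<noteq> 0\<close>])
    have mp: "map_vec p (A i *\<^sub>v x i) = map_mat p (A i) *\<^sub>v v0" unfolding v0_def using Acar[of i] xic by (rule vhom_mv)
    have lk: "liftok (i+1) (A i *\<^sub>v x i)" unfolding liftok_def mp using Wi1 Acar[of i] xic by simp
    have rs: "relstep i (x i) (A i *\<^sub>v x i)" using True by (simp add: relstep_def)
    have "relfam m (i+1) (x(i+1 := A i *\<^sub>v x i))" using relfam_ext[OF x(1) step(1) _ rs] Acar[of i] xic by simp
    moreover have "\<forall>k. m \<le> k \<and> k \<le> i+1 \<longrightarrow> liftok k ((x(i+1 := A i *\<^sub>v x i)) k)"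
      using x(2) lk by auto
    ultimately show ?thesis by blast
  next
    case False
    then have "map_mat p (A i) *\<^sub>v v0 = 0\<^sub>v (n (i+1))" using v0W unfolding dir_def by blast
    then have "v0 \<in> (\<lambda>y. map_mat p (B i) *\<^sub>v y) ` W (i+1)" using exA[of i] v0W by blast
    then obtain y where y: "y \<in> W (i+1)" "v0 = map_mat p (B i) *\<^sub>v y" by blast
    obtain w' where w': "w' \<in> carrier_vec (n (i+1))" "w' \<noteq> 0\<^sub>v (n (i+1))" "W (i+1) = {c \<cdot>\<^sub>v w' | c. True}" using Wgen by blast
    obtain c where c: "y = c \<cdot>\<^sub>v w'" using y(1) w'(3) by auto
    have v0e: "v0 = c \<cdot>\<^sub>v (map_mat p (B i) *\<^sub>v w')" using y(2) unfolding c using mv_smult[OF bC w'(1)] by simp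
    have bwc: "map_mat p (B i) *\<^sub>v w' \<in> carrier_vec (n i)" using bC w'(1) by simp
    have "c \<noteq> 0"
    proof
      assume "c = 0"
      then have "v0 = 0\<^sub>v (n i)" using v0e carrier_vecD[OF bwc] by (intro eq_vecI) auto
      then show False using v0nz by simp
    qed
    have bw: "map_mat p (B i) *\<^sub>v w' = (1/c) \<cdot>\<^sub>v v0" unfolding v0e smult_smult_assoc using \<open>c \<noteq> 0\<close> by simp
    define u where "u = (SOME r. p r = 1/c)"
    have pu: "p u = 1/c" unfolding u_def by (rule pick)
    have pu0: "p u \<noteq> 0" using pu \<open>c \<noteq> 0\<close> by simp
    obtain Y0 where Y0: "Y0 \<in> carrier_vec (n (i+1))" "map_vec p Y0 = w'" using liftv[OF w'(1)] by blast
    have BY0: "B i *\<^sub>v Y0 \<in> carrier_vec (n i)" using Bcar[of i] Y0(1) by simp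
    have uxc: "u \<cdot>\<^sub>v x i \<in> carrier_vec (n i)" using xic by simp
    have "map_vec p (B i *\<^sub>v Y0 - u \<cdot>\<^sub>v x i) = 0\<^sub>v (n i)"
    proof -
      have "map_vec p (B i *\<^sub>v Y0 - u \<cdot>\<^sub>v x i) = map_vec p (B i *\<^sub>v Y0) - map_vec p (u \<cdot>\<^sub>v x i)"
        by (rule vhom_minus[OF BY0 uxc])
      also have "map_vec p (B i *\<^sub>v Y0) = map_mat p (B i) *\<^sub>v w'" using vhom_mv[OF Bcar[of i] Y0(1)] Y0(2) by simp
      also have "map_vec p (u \<cdot>\<^sub>v x i) = (1/c) \<cdot>\<^sub>v v0" unfolding vhom_smult pu v0_def ..
      finally show ?thesis using bw bwc by simp
    qed
    then obtain w where w: "w \<in> carrier_vec (n i)" "B i *\<^sub>v Y0 - u \<cdot>\<^sub>v x i = t \<cdot>\<^sub>v w"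
      using vdiv[of "B i *\<^sub>v Y0 - u \<cdot>\<^sub>v x i" "n i"] BY0 uxc by auto
    obtain \<delta> z where dz: "relfam m i \<delta>" "z \<in> carrier_vec (n (i+1))" "w = \<delta> i + B i *\<^sub>v z"
      using G[OF step(1)] w(1) by blast
    define xx where "xx = (\<lambda>k. u \<cdot>\<^sub>v x k + t \<cdot>\<^sub>v \<delta> k)"
    have rxx: "relfam m i xx" unfolding xx_def by (rule relfam_lin[OF x(1) dz(1)])
    have di: "\<delta> i \<in> carrier_vec (n i)" using dz(1) step(1) unfolding relfam_def by auto
    have Bz: "B i *\<^sub>v z \<in> carrier_vec (n i)" using Bcar[of i] dz(2) by simp
    define yn where "yn = Y0 - t \<cdot>\<^sub>v z"
    have ync: "yn \<in> carrier_vec (n (i+1))" unfolding yn_def using Y0(1) dz(2) by simp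
    have Byn: "B i *\<^sub>v yn = B i *\<^sub>v Y0 - t \<cdot>\<^sub>v (B i *\<^sub>v z)"
      unfolding yn_def using Bcar[of i] Y0(1) dz(2)
      by (simp add: mult_minus_distrib_mat_vec[of _ "n i" "n (i+1)"] mv_smult[of _ "n i" "n (i+1)"])
    have Bynx: "B i *\<^sub>v yn = xx i"
    proof (rule eq_vecI)
      fix l assume "l < dim_vec (xx i)"
      then have l: "l < n i" using xic di unfolding xx_def by simp
      have e1: "(B i *\<^sub>v Y0) $ l = u * x i $ l + t * w $ l"
        using arg_cong[OF w(2), of "\<lambda>v. v $ l"] l carrier_vecD[OF BY0] carrier_vecD[OF xic] carrier_vecD[OF w(1)]
        by (simp add: algebra_simps)
      have e2: "w $ l = \<delta> i $ l + (B i *\<^sub>v z) $ l"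
        using arg_cong[OF dz(3), of "\<lambda>v. v $ l"] l carrier_vecD[OF di] carrier_vecD[OF Bz] by simp
      show "(B i *\<^sub>v yn) $ l = xx i $ l"
        unfolding Byn xx_def using l carrier_vecD[OF BY0] carrier_vecD[OF Bz] carrier_vecD[OF xic] carrier_vecD[OF di]
        by (simp add: e1 e2 algebra_simps)
    qed (use xic di Bcar[of i] in \<open>simp add: xx_def\<close>)
    have rs: "relstep i (xx i) yn" using False Bynx by (simp add: relstep_def)
    have rf: "relfam m (i+1) (xx(i+1 := yn))" using relfam_ext[OF rxx step(1) ync rs] .
    have lkk: "liftok k (xx k)" if k: "m \<le> k" "k \<le> i" for k
    proof -
      have lk: "liftok k (x k)" using x(2) k by auto
      have xkc: "x k \<in> carrier_vec (n k)" using lk unfolding liftok_def by auto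
      have dkc: "\<delta> k \<in> carrier_vec (n k)" using dz(1) k unfolding relfam_def by auto
      have mp: "map_vec p (xx k) = p u \<cdot>\<^sub>v map_vec p (x k)"
        unfolding xx_def using xkc dkc
        by (simp add: vhom_add[of _ "n k"] vhom_smult pt) (intro eq_vecI, auto)
      have "W k = {c \<cdot>\<^sub>v map_vec p (xx k) | c. True}"
        by (rule span_eq[OF _ mp pu0]) (use lk in \<open>simp add: liftok_def\<close>)
      then show ?thesis unfolding liftok_def xx_def using xkc dkc by simp
    qed
    have lkn: "liftok (i+1) yn"
    proof -
      have "map_vec p yn = w'" unfolding yn_def using Y0 dz(2)
        by (simp add: vhom_minus[of _ "n (i+1)"] vhom_smult pt) (intro eq_vecI, auto)
      then show ?thesis unfolding liftok_def using ync w'(3) by simp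
    qed
    have "\<forall>k. m \<le> k \<and> k \<le> i+1 \<longrightarrow> liftok k ((xx(i+1 := yn)) k)"
      using lkk lkn by auto
    then show ?thesis using rf by blast
  qed
qed

end

lemma smult_cancel_vec:
  assumes "(c::'a::idom) \<noteq> 0" "v \<in> carrier_vec N" "w \<in> carrier_vec N" "c \<cdot>\<^sub>v v = c \<cdot>\<^sub>v w"
  shows "v = w"
proof (rule eq_vecI)
  fix l assume "l < dim_vec w"
  then have l: "l < N" using assms(3) by simp
  have "(c \<cdot>\<^sub>v v) $ l = (c \<cdot>\<^sub>v w) $ l" using assms(4) by simp
  then show "v $ l = w $ l" using l assms(1) carrier_vecD[OF assms(2)] carrier_vecD[OF assms(3)] by simp
qed (use assms in simp)

lemma kerinj:
  assumes M: "(M::'a::field mat) \<in> carrier_mat a b"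
    and inj: "\<forall>v\<in>carrier_vec b. M *\<^sub>v v = 0\<^sub>v a \<longrightarrow> v = 0\<^sub>v b"
    and v: "v1 \<in> carrier_vec b" "v2 \<in> carrier_vec b" and e: "M *\<^sub>v v1 = M *\<^sub>v v2"
  shows "v1 = v2"
proof -
  have "M *\<^sub>v (v1 - v2) = M *\<^sub>v v1 - M *\<^sub>v v2" using M v by (rule mult_minus_distrib_mat_vec)
  also have "\<dots> = 0\<^sub>v a" unfolding e using M v by simp
  finally have "v1 - v2 = 0\<^sub>v b" using inj v by simp
  show ?thesis
  proof (rule eq_vecI)
    fix l assume "l < dim_vec v2"
    then have l: "l < b" using v by simp
    have "(v1 - v2) $ l = 0\<^sub>v b $ l" using \<open>v1 - v2 = 0\<^sub>v b\<close> by simp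
    then show "v1 $ l = v2 $ l" using l carrier_vecD[OF v(1)] carrier_vecD[OF v(2)] by simp
  qed (use v in simp)
qed

context Lsetup begin

lemma divlem:
  assumes M: "M \<in> carrier_mat a b"
    and inj: "\<forall>v\<in>carrier_vec b. map_mat p M *\<^sub>v v = 0\<^sub>v a \<longrightarrow> v = 0\<^sub>v b"
  shows "y \<in> carrier_vec b \<Longrightarrow> w \<in> carrier_vec a \<Longrightarrow> M *\<^sub>v y = t ^ e \<cdot>\<^sub>v w \<Longrightarrow> \<exists>y'\<in>carrier_vec b. y = t ^ e \<cdot>\<^sub>v y'"
proof (induction e arbitrary: y w)
  case 0
  then show ?case by auto
next
  case (Suc e)
  have "map_vec p (M *\<^sub>v y) = 0\<^sub>v a"
    unfolding Suc(4) vhom_smult using Suc(3) by (intro eq_vecI) (auto simp: hom_mult pt)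
  then have "map_mat p M *\<^sub>v map_vec p y = 0\<^sub>v a" using vhom_mv[OF M Suc(2)] by simp
  then have "map_vec p y = 0\<^sub>v b" using inj Suc(2) by simp
  then obtain y1 where y1: "y1 \<in> carrier_vec b" "y = t \<cdot>\<^sub>v y1" using vdiv Suc(2) by blast
  have "t \<cdot>\<^sub>v (M *\<^sub>v y1) = t \<cdot>\<^sub>v (t ^ e \<cdot>\<^sub>v w)"
    using Suc(4) unfolding y1(2) mv_smult[OF M y1(1)] by (simp add: smult_smult_assoc)
  then have "M *\<^sub>v y1 = t ^ e \<cdot>\<^sub>v w" using smult_cancel_vec[OF t0, of "M *\<^sub>v y1" a] M y1(1) Suc(3) by simp
  then obtain y2 where "y2 \<in> carrier_vec b" "y1 = t ^ e \<cdot>\<^sub>v y2" using Suc(1)[OF y1(1) Suc(3)] by blast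
  then show ?case using y1(2) by (auto simp: smult_smult_assoc)
qed

lemma prevstep:
  assumes inj: "\<forall>v\<in>carrier_vec (n i). map_mat p (A i) *\<^sub>v v = 0\<^sub>v (n (i+1)) \<longrightarrow> v = 0\<^sub>v (n i)"
    and lv: "liftok (i+1) v"
  shows "\<exists>u. liftok i u \<and> A i *\<^sub>v u = v"
proof -
  have vc: "v \<in> carrier_vec (n (i+1))" using lv unfolding liftok_def by auto
  have AC: "A i \<in> carrier_mat (n (i+1)) (n i)" by (rule Acar)
  have BC: "B i \<in> carrier_mat (n i) (n (i+1))" by (rule Bcar)
  define y where "y = B i *\<^sub>v v"
  have yc: "y \<in> carrier_vec (n i)" unfolding y_def using BC vc by simp
  obtain d where d: "d \<noteq> 0" "p d = 0" "A i * B i = d \<cdot>\<^sub>m 1\<^sub>m (n (i+1))" using AB by blast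
  obtain ud e where ue: "ud dvd 1" "d = ud * t ^ e" using dvr[OF d(1)] by blast
  obtain ud' where ud': "1 = ud * ud'" using ue(1) by (auto elim: dvdE)
  have Ay: "A i *\<^sub>v y = t ^ e \<cdot>\<^sub>v (ud \<cdot>\<^sub>v v)"
  proof -
    have "A i *\<^sub>v y = (A i * B i) *\<^sub>v v" unfolding y_def using AC BC vc by simp
    also have "\<dots> = d \<cdot>\<^sub>v v" unfolding d(3) using vc by (simp add: scalar_id_mv)
    finally show ?thesis unfolding ue(2) by (simp add: smult_smult_assoc mult.commute)
  qed
  obtain y' where y': "y' \<in> carrier_vec (n i)" "y = t ^ e \<cdot>\<^sub>v y'"
    using divlem[OF AC inj yc _ Ay] vc by auto
  have "t ^ e \<cdot>\<^sub>v (A i *\<^sub>v y') = t ^ e \<cdot>\<^sub>v (ud \<cdot>\<^sub>v v)" using Ay unfolding y'(2) mv_smult[OF AC y'(1)] .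
  then have Ay': "A i *\<^sub>v y' = ud \<cdot>\<^sub>v v" using smult_cancel_vec[of "t ^ e" "A i *\<^sub>v y'" "n (i+1)"] t0 AC y'(1) vc by simp
  define u where "u = ud' \<cdot>\<^sub>v y'"
  have uc: "u \<in> carrier_vec (n i)" unfolding u_def using y'(1) by simp
  have Au: "A i *\<^sub>v u = v" unfolding u_def mv_smult[OF AC y'(1)] Ay' smult_smult_assoc
    using ud' by (simp add: mult.commute)
  obtain w where w: "w \<in> carrier_vec (n i)" "w \<noteq> 0\<^sub>v (n i)" "W i = {c \<cdot>\<^sub>v w | c. True}" using Wgen by blast
  have aC: "map_mat p (A i) \<in> carrier_mat (n (i+1)) (n i)" using AC by simp
  have "w \<in> W i" using w(3) by (metis (mono_tags, lifting) mem_Collect_eq one_smult_vec)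
  then have "map_mat p (A i) *\<^sub>v w \<in> W (i+1)" using WA by blast
  then obtain \<beta> where \<beta>: "map_mat p (A i) *\<^sub>v w = \<beta> \<cdot>\<^sub>v map_vec p v" using lv unfolding liftok_def by auto
  have pv: "map_vec p v = map_mat p (A i) *\<^sub>v map_vec p u" using vhom_mv[OF AC uc] Au by simp
  have puc: "map_vec p u \<in> carrier_vec (n i)" using uc by simp
  have "map_mat p (A i) *\<^sub>v w = map_mat p (A i) *\<^sub>v (\<beta> \<cdot>\<^sub>v map_vec p u)"
    unfolding \<beta> pv mv_smult[OF aC puc] ..
  then have we: "w = \<beta> \<cdot>\<^sub>v map_vec p u" using kerinj[OF aC inj w(1) _] puc by simp
  have "\<beta> \<noteq> 0"
  proof
    assume "\<beta> = 0"
    then have "w = 0\<^sub>v (n i)" unfolding we using puc by (intro eq_vecI) auto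
    then show False using w(2) by simp
  qed
  have we': "map_vec p u = (1/\<beta>) \<cdot>\<^sub>v w" unfolding we smult_smult_assoc using \<open>\<beta> \<noteq> 0\<close> by simp
  have "W i = {c \<cdot>\<^sub>v map_vec p u | c. True}" by (rule span_eq[OF w(3) we']) (use \<open>\<beta> \<noteq> 0\<close> in simp)
  then show ?thesis using uc Au unfolding liftok_def by blast
qed

lemma nextstep:
  assumes inj: "\<forall>v\<in>carrier_vec (n (i+1)). map_mat p (B i) *\<^sub>v v = 0\<^sub>v (n i) \<longrightarrow> v = 0\<^sub>v (n (i+1))"
    and lv: "liftok i v"
  shows "\<exists>u. liftok (i+1) u \<and> B i *\<^sub>v u = v"
proof -
  have vc: "v \<in> carrier_vec (n i)" using lv unfolding liftok_def by auto
  have AC: "A i \<in> carrier_mat (n (i+1)) (n i)" by (rule Acar)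
  have BC: "B i \<in> carrier_mat (n i) (n (i+1))" by (rule Bcar)
  define y where "y = A i *\<^sub>v v"
  have yc: "y \<in> carrier_vec (n (i+1))" unfolding y_def using AC vc by simp
  obtain d where d: "d \<noteq> 0" "p d = 0" "B i * A i = d \<cdot>\<^sub>m 1\<^sub>m (n i)" using BA by blast
  obtain ud e where ue: "ud dvd 1" "d = ud * t ^ e" using dvr[OF d(1)] by blast
  obtain ud' where ud': "1 = ud * ud'" using ue(1) by (auto elim: dvdE)
  have By: "B i *\<^sub>v y = t ^ e \<cdot>\<^sub>v (ud \<cdot>\<^sub>v v)"
  proof -
    have "B i *\<^sub>v y = (B i * A i) *\<^sub>v v" unfolding y_def using AC BC vc by simp
    also have "\<dots> = d \<cdot>\<^sub>v v" unfolding d(3) using vc by (simp add: scalar_id_mv)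
    finally show ?thesis unfolding ue(2) by (simp add: smult_smult_assoc mult.commute)
  qed
  obtain y' where y': "y' \<in> carrier_vec (n (i+1))" "y = t ^ e \<cdot>\<^sub>v y'"
    using divlem[OF BC inj yc _ By] vc by auto
  have "t ^ e \<cdot>\<^sub>v (B i *\<^sub>v y') = t ^ e \<cdot>\<^sub>v (ud \<cdot>\<^sub>v v)" using By unfolding y'(2) mv_smult[OF BC y'(1)] .
  then have By': "B i *\<^sub>v y' = ud \<cdot>\<^sub>v v" using smult_cancel_vec[of "t ^ e" "B i *\<^sub>v y'" "n i"] t0 BC y'(1) vc by simp
  define u where "u = ud' \<cdot>\<^sub>v y'"
  have uc: "u \<in> carrier_vec (n (i+1))" unfolding u_def using y'(1) by simp
  have Bu: "B i *\<^sub>v u = v" unfolding u_def mv_smult[OF BC y'(1)] By' smult_smult_assoc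
    using ud' by (simp add: mult.commute)
  obtain w where w: "w \<in> carrier_vec (n (i+1))" "w \<noteq> 0\<^sub>v (n (i+1))" "W (i+1) = {c \<cdot>\<^sub>v w | c. True}" using Wgen by blast
  have bC: "map_mat p (B i) \<in> carrier_mat (n i) (n (i+1))" using BC by simp
  have "w \<in> W (i+1)" using w(3) by (metis (mono_tags, lifting) mem_Collect_eq one_smult_vec)
  then have "map_mat p (B i) *\<^sub>v w \<in> W i" using WB by blast
  then obtain \<beta> where \<beta>: "map_mat p (B i) *\<^sub>v w = \<beta> \<cdot>\<^sub>v map_vec p v" using lv unfolding liftok_def by auto
  have pv: "map_vec p v = map_mat p (B i) *\<^sub>v map_vec p u" using vhom_mv[OF BC uc] Bu by simp
  have puc: "map_vec p u \<in> carrier_vec (n (i+1))" using uc by simp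
  have "map_mat p (B i) *\<^sub>v w = map_mat p (B i) *\<^sub>v (\<beta> \<cdot>\<^sub>v map_vec p u)"
    unfolding \<beta> pv mv_smult[OF bC puc] ..
  then have we: "w = \<beta> \<cdot>\<^sub>v map_vec p u" using kerinj[OF bC inj w(1) _] puc by simp
  have "\<beta> \<noteq> 0"
  proof
    assume "\<beta> = 0"
    then have "w = 0\<^sub>v (n (i+1))" unfolding we using puc by (intro eq_vecI) auto
    then show False using w(2) by simp
  qed
  have we': "map_vec p u = (1/\<beta>) \<cdot>\<^sub>v w" unfolding we smult_smult_assoc using \<open>\<beta> \<noteq> 0\<close> by simp
  have "W (i+1) = {c \<cdot>\<^sub>v map_vec p u | c. True}" by (rule span_eq[OF w(3) we']) (use \<open>\<beta> \<noteq> 0\<close> in simp)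
  then show ?thesis using uc Bu unfolding liftok_def by blast
qed

end

context Lsetup begin

lemma global:
  assumes mM: "m0 \<le> M0"
    and injA: "\<And>i. i < m0 \<Longrightarrow> \<forall>v\<in>carrier_vec (n i). map_mat p (A i) *\<^sub>v v = 0\<^sub>v (n (i+1)) \<longrightarrow> v = 0\<^sub>v (n i)"
    and injB: "\<And>i. M0 \<le> i \<Longrightarrow> \<forall>v\<in>carrier_vec (n (i+1)). map_mat p (B i) *\<^sub>v v = 0\<^sub>v (n i) \<longrightarrow> v = 0\<^sub>v (n (i+1))"
  shows "\<exists>x. \<forall>i. liftok i (x i) \<and> (A i *\<^sub>v x i = x (i+1) \<or> B i *\<^sub>v x (i+1) = x i)"
proof -
  obtain f where f: "relfam m0 M0 f" "\<And>i. m0 \<le> i \<Longrightarrow> i \<le> M0 \<Longrightarrow> liftok i (f i)" using mid[OF mM] by blast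
  define PV where "PV i v = (SOME u. liftok i u \<and> A i *\<^sub>v u = v)" for i v
  define NX where "NX i v = (SOME u. liftok (i+1) u \<and> B i *\<^sub>v u = v)" for i v
  define Lf where "Lf = rec_nat (f m0) (\<lambda>k v. PV (m0 - int k - 1) v)"
  define Rf where "Rf = rec_nat (f M0) (\<lambda>k v. NX (M0 + int k) v)"
  have Lf0: "Lf 0 = f m0" and LfS: "Lf (Suc k) = PV (m0 - int k - 1) (Lf k)" for k by (simp_all add: Lf_def)
  have Rf0: "Rf 0 = f M0" and RfS: "Rf (Suc k) = NX (M0 + int k) (Rf k)" for k by (simp_all add: Rf_def)
  have PVspec: "liftok i (PV i v) \<and> A i *\<^sub>v PV i v = v" if "i < m0" "liftok (i+1) v" for i v
    unfolding PV_def by (rule someI_ex) (rule prevstep[OF injA[OF that(1)] that(2)])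
  have NXspec: "liftok (i+1) (NX i v) \<and> B i *\<^sub>v NX i v = v" if "M0 \<le> i" "liftok i v" for i v
    unfolding NX_def by (rule someI_ex) (rule nextstep[OF injB[OF that(1)] that(2)])
  have Lok: "liftok (m0 - int k) (Lf k)" for k
  proof (induction k)
    case 0 then show ?case using f(2)[of m0] mM Lf0 by simp
  next
    case (Suc k)
    have "liftok (m0 - int k - 1 + 1) (Lf k)" using Suc by simp
    then have "liftok (m0 - int k - 1) (Lf (Suc k))" using PVspec[of "m0 - int k - 1" "Lf k"] LfS[of k] by simp
    moreover have "m0 - int k - 1 = m0 - int (Suc k)" by simp
    ultimately show ?case by metis
  qed
  have Lrel: "A (m0 - int k - 1) *\<^sub>v Lf (Suc k) = Lf k" for k
  proof -
    have "liftok (m0 - int k - 1 + 1) (Lf k)" using Lok[of k] by simp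
    then show ?thesis using PVspec[of "m0 - int k - 1" "Lf k"] LfS[of k] by simp
  qed
  have Rok: "liftok (M0 + int k) (Rf k)" for k
  proof (induction k)
    case 0 then show ?case using f(2)[of M0] mM Rf0 by simp
  next
    case (Suc k)
    have "liftok (M0 + int k + 1) (Rf (Suc k))" using NXspec[of "M0 + int k" "Rf k"] RfS[of k] Suc by simp
    moreover have "M0 + int k + 1 = M0 + int (Suc k)" by simp
    ultimately show ?case by metis
  qed
  have Rrel: "B (M0 + int k) *\<^sub>v Rf (Suc k) = Rf k" for k
    using NXspec[of "M0 + int k" "Rf k"] RfS[of k] Rok[of k] by simp
  define x where "x i = (if i < m0 then Lf (nat (m0 - i)) else if i \<le> M0 then f i else Rf (nat (i - M0)))" for i
  have xL: "x i = Lf (nat (m0 - i))" if "i \<le> m0" for i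
    using that Lf0 mM by (cases "i < m0") (auto simp: x_def)
  have xR: "x i = Rf (nat (i - M0))" if "M0 \<le> i" for i
    using that Rf0 mM by (cases "M0 < i") (auto simp: x_def)
  have "liftok i (x i) \<and> (A i *\<^sub>v x i = x (i+1) \<or> B i *\<^sub>v x (i+1) = x i)" for i
  proof -
    have lk: "liftok i (x i)"
    proof (cases "i < m0")
      case True then show ?thesis using xL[of i] Lok[of "nat (m0 - i)"] by simp
    next
      case False
      show ?thesis
      proof (cases "i \<le> M0")
        case True then show ?thesis using False f(2)[of i] by (simp add: x_def)
      next
        case False2: False
        then show ?thesis using xR[of i] Rok[of "nat (i - M0)"] by simp
      qed
    qed
    have rel: "A i *\<^sub>v x i = x (i+1) \<or> B i *\<^sub>v x (i+1) = x i"
    proof (cases "i < m0")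
      case True
      define k where "k = nat (m0 - i - 1)"
      have "nat (m0 - i) = Suc k" using True unfolding k_def by linarith
      then have e1: "x i = Lf (Suc k)" using xL[of i] True by simp
      have kk: "nat (m0 - (i + 1)) = k" unfolding k_def by (rule arg_cong[where f=nat]) simp
      have e2: "x (i+1) = Lf k" using xL[of "i+1", unfolded kk] True by simp
      have e3: "m0 - int k - 1 = i" using True by (simp add: k_def)
      show ?thesis using Lrel[of k] e1 e2 e3 by simp
    next
      case False
      show ?thesis
      proof (cases "i < M0")
        case True
        then have "relstep i (f i) (f (i+1))" using f(1) False unfolding relfam_def by auto
        moreover have "x i = f i" "x (i+1) = f (i+1)" using False True by (auto simp: x_def)
        ultimately show ?thesis unfolding relstep_def by (auto split: if_splits)
      next
        case False2: False
        define k where "k = nat (i - M0)"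
        have e1: "x i = Rf k" using xR[of i] False2 by (simp add: k_def)
        have kk: "nat (i + 1 - M0) = Suc k" unfolding k_def using False2 by linarith
        have e2: "x (i+1) = Rf (Suc k)" using xR[of "i+1", unfolded kk] False2 by simp
        have e3: "M0 + int k = i" using False2 by (simp add: k_def)
        show ?thesis using Rrel[of k] e1 e2 e3 by simp
      qed
    qed
    show ?thesis using lk rel by blast
  qed
  then show ?thesis by blast
qed

end

lemma ring_hom_of:
  assumes "is_ring_hom (f::'a::ring_1 \<Rightarrow> 'b::ring_1)"
  shows "Ring_Hom.ring_hom f"
proof -
  have a: "f (x + y) = f x + f y" "f (x * y) = f x * f y" "f 1 = 1" for x y
    using assms unfolding is_ring_hom_def by auto
  have z: "f 0 = 0" using a(1)[of 0 0] by simp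
  show ?thesis by unfold_locales (use a z in auto)
qed

lemma scal_lemma:
  assumes hom: "Ring_Hom.ring_hom (\<iota>::'r::idom \<Rightarrow> 'K::field)" and inj: "inj \<iota>"
    and M: "M \<in> carrier_mat N N" and N: "0 < N"
    and e: "map_mat \<iota> M = c \<cdot>\<^sub>m 1\<^sub>m N" and c: "c \<noteq> 0"
  shows "\<exists>r. r \<noteq> 0 \<and> M = r \<cdot>\<^sub>m 1\<^sub>m N"
proof -
  interpret ring_hom \<iota> by (rule hom)
  define r where "r = M $$ (0,0)"
  have ent: "\<iota> (M $$ (k,l)) = (if k = l then c else 0)" if "k < N" "l < N" for k l
  proof -
    have "\<iota> (M $$ (k,l)) = map_mat \<iota> M $$ (k,l)" using M that by simp
    also have "\<dots> = (if k = l then c else 0)" unfolding e using that by simp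
    finally show ?thesis .
  qed
  have ir: "\<iota> r = c" unfolding r_def using ent[of 0 0] N by simp
  have "M = r \<cdot>\<^sub>m 1\<^sub>m N"
  proof (rule eq_matI)
    fix k l assume kl: "k < dim_row (r \<cdot>\<^sub>m 1\<^sub>m N)" "l < dim_col (r \<cdot>\<^sub>m 1\<^sub>m N)"
    then have kl': "k < N" "l < N" by auto
    have "\<iota> (M $$ (k,l)) = \<iota> ((r \<cdot>\<^sub>m 1\<^sub>m N) $$ (k,l))"
      using ent[OF kl'] kl' ir by auto
    then show "M $$ (k,l) = (r \<cdot>\<^sub>m 1\<^sub>m N) $$ (k,l)" using inj by (simp add: inj_eq)
  qed (use M in auto)
  moreover have "r \<noteq> 0" using ir c by auto
  ultimately show ?thesis by blast
qed

lemma up_inj: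
  assumes rep: "is_rep n a b"
  shows "inj_on (\<lambda>x. upcomp n a i (Suc k) *\<^sub>v x) (carrier_vec (n i)) \<Longrightarrow> inj_on (\<lambda>x. a i *\<^sub>v x) (carrier_vec (n i))"
proof (induction k)
  case 0
  have "a i * 1\<^sub>m (n i) *\<^sub>v x = a i *\<^sub>v x" if "x \<in> carrier_vec (n i)" for x
    using rep that unfolding is_rep_def by (metis right_mult_one_mat)
  then show ?case using 0 unfolding inj_on_def by simp
next
  case (Suc k)
  have car: "upcomp n a i j \<in> carrier_mat (n (i + int j)) (n i)" for j
  proof (induction j)
    case 0 then show ?case by simp
  next
    case (Suc j)
    have "a (i + int j) \<in> carrier_mat (n (i + int j + 1)) (n (i + int j))" using rep unfolding is_rep_def by auto
    then have m: "a (i + int j) * upcomp n a i j \<in> carrier_mat (n (i + int j + 1)) (n i)"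
      by (rule mult_carrier_mat[OF _ Suc.IH])
    have e: "i + int (Suc j) = i + int j + 1" by simp
    show ?case unfolding upcomp.simps(2) e by (rule m)
  qed
  have ac: "a (i + int (Suc k)) \<in> carrier_mat (n (i + int (Suc k) + 1)) (n (i + int (Suc k)))"
    using rep unfolding is_rep_def by blast
  have "inj_on (\<lambda>x. upcomp n a i (Suc k) *\<^sub>v x) (carrier_vec (n i))"
  proof (rule inj_onI)
    fix x y assume xy: "x \<in> carrier_vec (n i)" "y \<in> carrier_vec (n i)" "upcomp n a i (Suc k) *\<^sub>v x = upcomp n a i (Suc k) *\<^sub>v y"
    have "upcomp n a i (Suc (Suc k)) *\<^sub>v x = upcomp n a i (Suc (Suc k)) *\<^sub>v y"
      using xy car[of "Suc k"] ac by simp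
    then show "x = y" using Suc(2) xy unfolding inj_on_def by blast
  qed
  then show ?case by (rule Suc(1))
qed

lemma down_inj:
  assumes rep: "is_rep n a b"
  shows "inj_on (\<lambda>x. downcomp n b i (Suc k) *\<^sub>v x) (carrier_vec (n i)) \<Longrightarrow> inj_on (\<lambda>x. b (i - 1) *\<^sub>v x) (carrier_vec (n i))"
proof (induction k)
  case 0
  have "b (i - 1) * 1\<^sub>m (n i) *\<^sub>v x = b (i - 1) *\<^sub>v x" if "x \<in> carrier_vec (n i)" for x
  proof -
    have "b (i - 1) \<in> carrier_mat (n (i - 1)) (n (i - 1 + 1))" using rep unfolding is_rep_def by blast
    then show ?thesis using that by simp
  qed
  then show ?case using 0 unfolding inj_on_def by simp
next
  case (Suc k)
  have car: "downcomp n b i j \<in> carrier_mat (n (i - int j)) (n i)" for j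
  proof (induction j)
    case 0 then show ?case by simp
  next
    case (Suc j)
    have "b (i - int j - 1) \<in> carrier_mat (n (i - int j - 1)) (n (i - int j - 1 + 1))" using rep unfolding is_rep_def by blast
    then show ?case using Suc by (simp add: algebra_simps)
  qed
  have bc: "b (i - int (Suc k) - 1) \<in> carrier_mat (n (i - int (Suc k) - 1)) (n (i - int (Suc k) - 1 + 1))"
    using rep unfolding is_rep_def by blast
  have "inj_on (\<lambda>x. downcomp n b i (Suc k) *\<^sub>v x) (carrier_vec (n i))"
  proof (rule inj_onI)
    fix x y assume xy: "x \<in> carrier_vec (n i)" "y \<in> carrier_vec (n i)" "downcomp n b i (Suc k) *\<^sub>v x = downcomp n b i (Suc k) *\<^sub>v y"
    have "downcomp n b i (Suc (Suc k)) *\<^sub>v x = downcomp n b i (Suc (Suc k)) *\<^sub>v y"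
      using xy car[of "Suc k"] bc by (simp add: algebra_simps)
    then show "x = y" using Suc(2) xy unfolding inj_on_def by blast
  qed
  then show ?case by (rule Suc(1))
qed

lemma inj_ker:
  assumes "inj_on (\<lambda>x. (M::'a::field mat) *\<^sub>v x) (carrier_vec q)" "M \<in> carrier_mat pp q"
  shows "\<forall>v\<in>carrier_vec q. M *\<^sub>v v = 0\<^sub>v pp \<longrightarrow> v = 0\<^sub>v q"
proof (intro ballI impI)
  fix v assume v: "v \<in> carrier_vec q" "M *\<^sub>v v = 0\<^sub>v pp"
  have "M *\<^sub>v 0\<^sub>v q = 0\<^sub>v pp" using assms(2) by (intro eq_vecI) (auto simp: row_def)
  then show "v = 0\<^sub>v q" using assms(1) v unfolding inj_on_def by (metis zero_carrier_vec)
qed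

theorem lemma4p1:
  fixes \<pi> :: "'r::idom \<Rightarrow> 'k::field" and \<iota> :: "'r \<Rightarrow> 'K::field"
    and n :: "int \<Rightarrow> nat" and A B :: "int \<Rightarrow> 'r mat"
    and W :: "int \<Rightarrow> 'k vec set"
  assumes "is_dvr TYPE('r)"
    and "is_residue_map \<pi>"
    and "is_fraction_field_map \<iota>"
    and "is_rep n A B"
    and "general_rep n (\<lambda>i. map_mat \<iota> (A i)) (\<lambda>i. map_mat \<iota> (B i))"
    and "colinked_chain n (\<lambda>i. map_mat \<pi> (A i)) (\<lambda>i. map_mat \<pi> (B i))"
    and "\<exists>H. finite_cosupport n (\<lambda>i. map_mat \<pi> (A i)) (\<lambda>i. map_mat \<pi> (B i)) H"
    and "subrep n (\<lambda>i. map_mat \<pi> (A i)) (\<lambda>i. map_mat \<pi> (B i)) W"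
    and "exact_subrep n (\<lambda>i. map_mat \<pi> (A i)) (\<lambda>i. map_mat \<pi> (B i)) W"
    and "pure_dim_one n W"
  shows "\<exists>x :: int \<Rightarrow> 'r vec.
           (\<forall>i. x i \<in> carrier_vec (n i) \<and> W i = {c \<cdot>\<^sub>v map_vec \<pi> (x i) | c. True}) \<and>
           (let Wt = (\<lambda>i. {r \<cdot>\<^sub>v x i | r. True}) in
             \<forall>i. (\<lambda>y. A i *\<^sub>v y) ` Wt i \<subseteq> Wt (i+1) \<and> (\<lambda>y. B i *\<^sub>v y) ` Wt (i+1) \<subseteq> Wt i)"
proof -
  note dvrA = assms(1) and resA = assms(2) and ffA = assms(3) and repA = assms(4) and genA = assms(5)
    and colA = assms(6) and cosA = assms(7) and subA = assms(8) and exA = assms(9) and pdA = assms(10)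
  obtain t :: 'r where t: "t \<noteq> 0" "\<not> t dvd 1" "\<And>x. x \<noteq> 0 \<Longrightarrow> \<exists>u m. u dvd 1 \<and> x = u * t ^ m"
    using dvrA unfolding is_dvr_def by blast
  have hp: "Ring_Hom.ring_hom \<pi>" using resA unfolding is_residue_map_def by (intro ring_hom_of) auto
  have hi: "Ring_Hom.ring_hom \<iota>" using ffA unfolding is_fraction_field_map_def by (intro ring_hom_of) auto
  have inji: "inj \<iota>" using ffA unfolding is_fraction_field_map_def by auto
  have surjp: "surj \<pi>" and pzero: "\<And>x. \<pi> x = 0 \<longleftrightarrow> \<not> x dvd 1" using resA unfolding is_residue_map_def by auto
  have Acar: "\<And>i. A i \<in> carrier_mat (n (i+1)) (n i)" and Bcar: "\<And>i. B i \<in> carrier_mat (n i) (n (i+1))"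
    using repA unfolding is_rep_def by auto
  have Wsub: "\<And>i. W i \<subseteq> carrier_vec (n i)"
    and WA: "\<And>i. (\<lambda>x. map_mat \<pi> (A i) *\<^sub>v x) ` W i \<subseteq> W (i+1)"
    and WB: "\<And>i. (\<lambda>y. map_mat \<pi> (B i) *\<^sub>v y) ` W (i+1) \<subseteq> W i"
    using subA unfolding subrep_def is_subspace_def by auto
  have exA': "\<And>i. {x \<in> W i. map_mat \<pi> (A i) *\<^sub>v x = 0\<^sub>v (n (i+1))} = (\<lambda>y. map_mat \<pi> (B i) *\<^sub>v y) ` W (i+1)"
    using exA unfolding exact_subrep_def by auto
  have pd1: "\<And>i. \<exists>w. w \<noteq> 0\<^sub>v (n i) \<and> W i = {c \<cdot>\<^sub>v w | c. True}" using pdA unfolding pure_dim_one_def by auto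
  have colink: "\<And>i x. x \<in> carrier_vec (n i) \<Longrightarrow> \<exists>y\<in>carrier_vec (n (i+1)). \<exists>z\<in>carrier_vec (n (i-1)).
        x = map_mat \<pi> (B i) *\<^sub>v y + map_mat \<pi> (A (i-1)) *\<^sub>v z"
    using colA unfolding colinked_chain_def by auto
  have npos: "0 < n i" for i
  proof (rule ccontr)
    assume "\<not> 0 < n i"
    then have n0: "n i = 0" by simp
    obtain w where w: "w \<noteq> 0\<^sub>v (n i)" "W i = {c \<cdot>\<^sub>v w | c. True}" using pd1 by blast
    have "1 \<cdot>\<^sub>v w \<in> W i" using w(2) by blast
    then have "w \<in> carrier_vec 0" using Wsub[of i] n0 by auto
    then have "w = 0\<^sub>v (n i)" using n0 by (intro eq_vecI) auto
    then show False using w(1) by simp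
  qed
  have BA: "\<exists>c. c \<noteq> 0 \<and> \<pi> c = 0 \<and> B i * A i = c \<cdot>\<^sub>m 1\<^sub>m (n i)" for i
  proof -
    obtain c where c: "c \<noteq> 0" "map_mat \<iota> (B i) * map_mat \<iota> (A i) = c \<cdot>\<^sub>m 1\<^sub>m (n i)"
      using genA unfolding general_rep_def by blast
    have M: "B i * A i \<in> carrier_mat (n i) (n i)" using Acar[of i] Bcar[of i] by simp
    have "map_mat \<iota> (B i * A i) = map_mat \<iota> (B i) * map_mat \<iota> (A i)"
      using semiring_hom.mat_hom_mult[OF ring_hom.axioms(1)[OF hi] Bcar[of i] Acar[of i]] .
    then obtain r where r: "r \<noteq> 0" "B i * A i = r \<cdot>\<^sub>m 1\<^sub>m (n i)"
      using scal_lemma[OF hi inji M npos[of i] _ c(1)] c(2) by auto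
    have "map_mat \<pi> (B i * A i) = map_mat \<pi> (B i) * map_mat \<pi> (A i)"
      using semiring_hom.mat_hom_mult[OF ring_hom.axioms(1)[OF hp] Bcar[of i] Acar[of i]] .
    also have "\<dots> = 0\<^sub>m (n i) (n i)" using colA unfolding colinked_chain_def by auto
    finally have "map_mat \<pi> (B i * A i) $$ (0,0) = 0" using npos[of i] by simp
    then have "\<pi> r = 0" using r(2) npos[of i] by simp
    then show ?thesis using r by blast
  qed
  have AB: "\<exists>c. c \<noteq> 0 \<and> \<pi> c = 0 \<and> A i * B i = c \<cdot>\<^sub>m 1\<^sub>m (n (i+1))" for i
  proof -
    obtain c where c: "c \<noteq> 0" "map_mat \<iota> (A i) * map_mat \<iota> (B i) = c \<cdot>\<^sub>m 1\<^sub>m (n (i+1))"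
      using genA unfolding general_rep_def by blast
    have M: "A i * B i \<in> carrier_mat (n (i+1)) (n (i+1))" using Acar[of i] Bcar[of i] by simp
    have "map_mat \<iota> (A i * B i) = map_mat \<iota> (A i) * map_mat \<iota> (B i)"
      using semiring_hom.mat_hom_mult[OF ring_hom.axioms(1)[OF hi] Acar[of i] Bcar[of i]] .
    then obtain r where r: "r \<noteq> 0" "A i * B i = r \<cdot>\<^sub>m 1\<^sub>m (n (i+1))"
      using scal_lemma[OF hi inji M npos[of "i+1"] _ c(1)] c(2) by auto
    have "map_mat \<pi> (A i * B i) = map_mat \<pi> (A i) * map_mat \<pi> (B i)"
      using semiring_hom.mat_hom_mult[OF ring_hom.axioms(1)[OF hp] Acar[of i] Bcar[of i]] .
    also have "\<dots> = 0\<^sub>m (n (i+1)) (n (i+1))" using colA unfolding colinked_chain_def by auto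
    finally have "map_mat \<pi> (A i * B i) $$ (0,0) = 0" using npos[of "i+1"] by simp
    then have "\<pi> r = 0" using r(2) npos[of "i+1"] by simp
    then show ?thesis using r by blast
  qed
  interpret L: Lsetup \<pi> t n A B W
  proof (intro Lsetup.intro Lsetup_axioms.intro)
    show "Ring_Hom.ring_hom \<pi>" by (rule hp)
  qed (use t surjp pzero Acar Bcar BA AB colink Wsub WA WB exA' pd1 in auto)
  obtain H where H: "finite_cosupport n (\<lambda>i. map_mat \<pi> (A i)) (\<lambda>i. map_mat \<pi> (B i)) H" using cosA by blast
  have Hf: "finite H" and Hc: "\<And>i. \<exists>j\<in>H. inj_on (\<lambda>x. comp_map n (\<lambda>i. map_mat \<pi> (A i)) (\<lambda>i. map_mat \<pi> (B i)) i j *\<^sub>v x) (carrier_vec (n i))"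
    using H unfolding finite_cosupport_def by auto
  have Hne: "H \<noteq> {}" using Hc[of 0] by auto
  define m0 where "m0 = Min H"
  define M0 where "M0 = Max H"
  have mM: "m0 \<le> M0" unfolding m0_def M0_def using Hf Hne by simp
  have rep': "is_rep n (\<lambda>i. map_mat \<pi> (A i)) (\<lambda>i. map_mat \<pi> (B i))"
    using Acar Bcar unfolding is_rep_def by simp
  have injA: "\<forall>v\<in>carrier_vec (n i). map_mat \<pi> (A i) *\<^sub>v v = 0\<^sub>v (n (i+1)) \<longrightarrow> v = 0\<^sub>v (n i)" if "i < m0" for i
  proof -
    obtain j where j: "j \<in> H" "inj_on (\<lambda>x. comp_map n (\<lambda>i. map_mat \<pi> (A i)) (\<lambda>i. map_mat \<pi> (B i)) i j *\<^sub>v x) (carrier_vec (n i))"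
      using Hc by blast
    have "m0 \<le> j" unfolding m0_def using Hf j(1) by simp
    then have ij: "i < j" using that by simp
    define k where "k = nat (j - i - 1)"
    have "nat (j - i) = Suc k" using ij unfolding k_def by linarith
    then have "comp_map n (\<lambda>i. map_mat \<pi> (A i)) (\<lambda>i. map_mat \<pi> (B i)) i j = upcomp n (\<lambda>i. map_mat \<pi> (A i)) i (Suc k)"
      unfolding comp_map_def using ij by simp
    then have "inj_on (\<lambda>x. map_mat \<pi> (A i) *\<^sub>v x) (carrier_vec (n i))"
      using up_inj[OF rep', of i k] j(2) by simp
    then show ?thesis using inj_ker[of "map_mat \<pi> (A i)" "n i" "n (i+1)"] Acar[of i] by simp
  qed
  have injB: "\<forall>v\<in>carrier_vec (n (i+1)). map_mat \<pi> (B i) *\<^sub>v v = 0\<^sub>v (n i) \<longrightarrow> v = 0\<^sub>v (n (i+1))" if "M0 \<le> i" for i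
  proof -
    obtain j where j: "j \<in> H" "inj_on (\<lambda>x. comp_map n (\<lambda>i. map_mat \<pi> (A i)) (\<lambda>i. map_mat \<pi> (B i)) (i+1) j *\<^sub>v x) (carrier_vec (n (i+1)))"
      using Hc by blast
    have "j \<le> M0" unfolding M0_def using Hf j(1) by simp
    then have ij: "j < i + 1" using that by simp
    define k where "k = nat (i - j)"
    have "nat (i + 1 - j) = Suc k" using ij unfolding k_def by linarith
    then have "comp_map n (\<lambda>i. map_mat \<pi> (A i)) (\<lambda>i. map_mat \<pi> (B i)) (i+1) j = downcomp n (\<lambda>i. map_mat \<pi> (B i)) (i+1) (Suc k)"
      unfolding comp_map_def using ij by simp
    then have "inj_on (\<lambda>x. map_mat \<pi> (B (i + 1 - 1)) *\<^sub>v x) (carrier_vec (n (i+1)))"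
      using down_inj[OF rep', of "i+1" k] j(2) by simp
    then have "inj_on (\<lambda>x. map_mat \<pi> (B i) *\<^sub>v x) (carrier_vec (n (i+1)))" by simp
    then show ?thesis using inj_ker[of "map_mat \<pi> (B i)" "n (i+1)" "n i"] Bcar[of i] by simp
  qed
  obtain x where x: "\<And>i. L.liftok i (x i)" "\<And>i. A i *\<^sub>v x i = x (i+1) \<or> B i *\<^sub>v x (i+1) = x i"
    using L.global[OF mM injA injB] by blast
  have P1: "\<forall>i. x i \<in> carrier_vec (n i) \<and> W i = {c \<cdot>\<^sub>v map_vec \<pi> (x i) | c. True}"
    using x(1) unfolding L.liftok_def by blast
  have xc: "x i \<in> carrier_vec (n i)" for i using P1 by blast
  have P2: "(\<lambda>y. A i *\<^sub>v y) ` {r \<cdot>\<^sub>v x i | r. True} \<subseteq> {r \<cdot>\<^sub>v x (i+1) | r. True} \<and>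
            (\<lambda>y. B i *\<^sub>v y) ` {r \<cdot>\<^sub>v x (i+1) | r. True} \<subseteq> {r \<cdot>\<^sub>v x i | r. True}" for i
  proof -
    obtain c where c: "B i * A i = c \<cdot>\<^sub>m 1\<^sub>m (n i)" using BA by blast
    obtain d where d: "A i * B i = d \<cdot>\<^sub>m 1\<^sub>m (n (i+1))" using AB by blast
    have Ax: "\<exists>s. A i *\<^sub>v x i = s \<cdot>\<^sub>v x (i+1)" and Bx: "\<exists>s. B i *\<^sub>v x (i+1) = s \<cdot>\<^sub>v x i"
    proof -
      have "A i *\<^sub>v x i = x (i+1) \<and> B i *\<^sub>v x (i+1) = c \<cdot>\<^sub>v x i \<or> B i *\<^sub>v x (i+1) = x i \<and> A i *\<^sub>v x i = d \<cdot>\<^sub>v x (i+1)"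
      proof (cases "A i *\<^sub>v x i = x (i+1)")
        case True
        have "B i *\<^sub>v x (i+1) = (B i * A i) *\<^sub>v x i" unfolding True[symmetric] using Acar[of i] Bcar[of i] xc[of i] by simp
        then show ?thesis using True c xc[of i] by (simp add: scalar_id_mv)
      next
        case False
        then have F: "B i *\<^sub>v x (i+1) = x i" using x(2)[of i] by blast
        have "A i *\<^sub>v x i = (A i * B i) *\<^sub>v x (i+1)" unfolding F[symmetric] using Acar[of i] Bcar[of i] xc[of "i+1"] by simp
        then show ?thesis using F d xc[of "i+1"] by (simp add: scalar_id_mv)
      qed
      then show "\<exists>s. A i *\<^sub>v x i = s \<cdot>\<^sub>v x (i+1)" "\<exists>s. B i *\<^sub>v x (i+1) = s \<cdot>\<^sub>v x i"
        by (metis one_smult_vec)+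
    qed
    obtain s1 where s1: "A i *\<^sub>v x i = s1 \<cdot>\<^sub>v x (i+1)" using Ax by blast
    obtain s2 where s2: "B i *\<^sub>v x (i+1) = s2 \<cdot>\<^sub>v x i" using Bx by blast
    have "A i *\<^sub>v (r \<cdot>\<^sub>v x i) = (r * s1) \<cdot>\<^sub>v x (i+1)" for r
      using mv_smult[OF Acar[of i] xc[of i]] s1 by (simp add: smult_smult_assoc)
    moreover have "B i *\<^sub>v (r \<cdot>\<^sub>v x (i+1)) = (r * s2) \<cdot>\<^sub>v x i" for r
      using mv_smult[OF Bcar[of i] xc[of "i+1"]] s2 by (simp add: smult_smult_assoc)
    ultimately show ?thesis by blast
  qed
  show ?thesis unfolding Let_def using P1 P2 by blast
qed

end
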